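(* Let $G$ be a $k$-terminal directed acyclic graph with unit edge lengths and let $P\subseteq K\times K$ be a set of terminal pairs $(s,t)$ such that $t$ is reachable from $s$ in $G$. Let $\pi$ be a consistent shortest-path tie-breaking scheme in $G$, and let $H$ be the subgraph of $G$ formed by the union of the directed paths $\pi(s,t)$ over all $(s,t)\in P$. Then $H$ has at most $|P|(|P|-1)/2$ branching events.
   Context: A shortest-path tie-breaking scheme is a function $\pi$ mapping every ordered pair of vertices $(s,t)$ with $t$ reachable from $s$ to a fixed shortest directed path from $s$ to $t$ (lengths measured in number of edges); $d(\cdot,\cdot)$ denotes the directed shortest-path distance. It is consistent if for all vertices $y,x,x',y'$: whenever $x,x'$ lie on $\pi(y,y')$ with $d(y,x)<d(y,x')$, the path $\pi(x,x')$ is a subpath of $\pi(y,y')$. A branching event in a digraph is a set $\{(u_1,v),(u_2,v)\}$ of two distinct directed edges entering the same vertex $v$. *)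

theory Defs
  imports Main "HOL-Library.Sublist"
begin

text \<open>Paths are nonempty vertex lists; all edges have unit length, so the length of a
  path is its number of edges, length p - 1.\<close>

definition is_path :: "('a \<times> 'a) set \<Rightarrow> 'a list \<Rightarrow> 'a \<Rightarrow> 'a \<Rightarrow> bool" where
  "is_path E p s t \<longleftrightarrow> p \<noteq> [] \<and> hd p = s \<and> last p = t \<and>
     (\<forall>i. Suc i < length p \<longrightarrow> (p ! i, p ! Suc i) \<in> E)"

definition dist :: "('a \<times> 'a) set \<Rightarrow> 'a \<Rightarrow> 'a \<Rightarrow> nat" where
  "dist E s t = (LEAST n. \<exists>p. is_path E p s t \<and> length p = Suc n)"

definition shortest_path :: "('a \<times> 'a) set \<Rightarrow> 'a list \<Rightarrow> 'a \<Rightarrow> 'a \<Rightarrow> bool" where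
  "shortest_path E p s t \<longleftrightarrow> is_path E p s t \<and> length p - 1 = dist E s t"

definition path_edges :: "'a list \<Rightarrow> ('a \<times> 'a) set" where
  "path_edges p = set (zip p (tl p))"

definition tie_breaking :: "'a set \<Rightarrow> ('a \<times> 'a) set \<Rightarrow> ('a \<times> 'a \<Rightarrow> 'a list) \<Rightarrow> bool" where
  "tie_breaking V E \<pi> \<longleftrightarrow>
     (\<forall>s\<in>V. \<forall>t\<in>V. (s, t) \<in> E\<^sup>* \<longrightarrow> shortest_path E (\<pi> (s, t)) s t)"

definition consistent :: "'a set \<Rightarrow> ('a \<times> 'a) set \<Rightarrow> ('a \<times> 'a \<Rightarrow> 'a list) \<Rightarrow> bool" where
  "consistent V E \<pi> \<longleftrightarrow>
     (\<forall>y\<in>V. \<forall>y'\<in>V. \<forall>x x'. (y, y') \<in> E\<^sup>* \<longrightarrow>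
        x \<in> set (\<pi> (y, y')) \<longrightarrow> x' \<in> set (\<pi> (y, y')) \<longrightarrow> dist E y x < dist E y x' \<longrightarrow>
        sublist (\<pi> (x, x')) (\<pi> (y, y')))"

definition union_edges :: "('a \<times> 'a \<Rightarrow> 'a list) \<Rightarrow> ('a \<times> 'a) set \<Rightarrow> ('a \<times> 'a) set" where
  "union_edges \<pi> P = (\<Union>st\<in>P. path_edges (\<pi> st))"

definition branching_events :: "('a \<times> 'a) set \<Rightarrow> ('a \<times> 'a) set set" where
  "branching_events F =
     {{e1, e2} | e1 e2. e1 \<in> F \<and> e2 \<in> F \<and> e1 \<noteq> e2 \<and> snd e1 = snd e2}"

end

theory Submission
  imports Defs
begin

lemma in_path_edges:
  "(a,b) \<in> path_edges p \<longleftrightarrow> (\<exists>i. Suc i < length p \<and> p!i = a \<and> p!Suc i = b)"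
proof
  assume "(a,b) \<in> path_edges p"
  then obtain n where "p!n = a" "tl p ! n = b" "n < length p" "n < length (tl p)"
    unfolding path_edges_def in_set_zip by auto
  then show "\<exists>i. Suc i < length p \<and> p!i = a \<and> p!Suc i = b"
    by (intro exI[of _ n]) (auto simp: nth_tl)
next
  assume "\<exists>i. Suc i < length p \<and> p!i = a \<and> p!Suc i = b"
  then obtain i where "Suc i < length p" "p!i = a" "p!Suc i = b" by blast
  then show "(a,b) \<in> path_edges p"
    unfolding path_edges_def in_set_zip by (intro exI[of _ i]) (auto simp: nth_tl)
qed

lemma path_trancl:
  assumes "is_path E p s t" "i < j" "j < length p"
  shows "(p!i, p!j) \<in> E\<^sup>+"
  using assms(2,3)
proof (induction j)
  case 0 then show ?case by simp
next
  case (Suc j)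
  have e: "(p!j, p!Suc j) \<in> E" using assms(1) Suc.prems unfolding is_path_def by blast
  show ?case
  proof (cases "i = j")
    case True then show ?thesis using e by auto
  next
    case False
    then have "(p!i, p!j) \<in> E\<^sup>+" using Suc by auto
    then show ?thesis using e by (meson trancl_into_trancl)
  qed
qed

lemma path_distinct:
  assumes "acyclic E" "is_path E p s t"
  shows "distinct p"
proof -
  have "p!i \<noteq> p!j" if "i < j" "j < length p" for i j
    using path_trancl[OF assms(2) that] assms(1) unfolding acyclic_def by force
  then show ?thesis unfolding distinct_conv_nth by (metis linorder_neqE_nat)
qed

lemma path_V:
  assumes "E \<subseteq> V \<times> V" "s \<in> V" "is_path E p s t" "i < length p"
  shows "p!i \<in> V"
proof (cases i)
  case 0 then show ?thesis using assms unfolding is_path_def by (metis hd_conv_nth)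
next
  case (Suc j)
  then have "(p!j, p!i) \<in> E" using assms unfolding is_path_def by auto
  then show ?thesis using assms(1) by auto
qed

lemma dist_le:
  assumes "is_path E p s t" shows "dist E s t \<le> length p - 1"
proof -
  have "p \<noteq> []" using assms unfolding is_path_def by auto
  then have "\<exists>q. is_path E q s t \<and> length q = Suc (length p - 1)" using assms by auto
  then show ?thesis unfolding dist_def by (rule Least_le)
qed

lemma path_take:
  assumes "is_path E p s t" "i < length p"
  shows "is_path E (take (Suc i) p) s (p!i)"
  using assms unfolding is_path_def
  by (auto simp: hd_take last_conv_nth)

lemma path_drop:
  assumes "is_path E p s t" "i < length p"
  shows "is_path E (drop i p) (p!i) t"
  using assms unfolding is_path_def
  by (auto simp: hd_drop_conv_nth)

lemma path_append:
  assumes "is_path E q s u" "is_path E r u t"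
  shows "is_path E (q @ tl r) s t"
proof -
  have q: "q \<noteq> []" "hd q = s" "last q = u" "\<And>i. Suc i < length q \<Longrightarrow> (q!i, q!Suc i) \<in> E"
    using assms(1) unfolding is_path_def by auto
  have r: "r \<noteq> []" "hd r = u" "last r = t" "\<And>i. Suc i < length r \<Longrightarrow> (r!i, r!Suc i) \<in> E"
    using assms(2) unfolding is_path_def by auto
  have "((q @ tl r)!k, (q @ tl r)!Suc k) \<in> E" if "Suc k < length (q @ tl r)" for k
  proof -
    consider "Suc k < length q" | "Suc k = length q" | "Suc k > length q" by linarith
    then show ?thesis
    proof cases
      case 1 then show ?thesis using q by (simp add: nth_append)
    next
      case 2
      then have k: "k = length q - 1" by simp
      then have "(q @ tl r)!k = last q" using q 2 by (simp add: nth_append last_conv_nth)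
      then have "(q @ tl r)!k = r!0" using q r by (simp add: hd_conv_nth)
      moreover have "(q @ tl r)!Suc k = r!1" using 2 that r by (simp add: nth_append nth_tl)
      moreover have "1 < length r" using 2 that by simp
      ultimately show ?thesis using r(4)[of 0] by simp
    next
      case 3
      then obtain m where m: "k = length q + m" by (metis less_Suc_eq_le le_Suc_ex)
      have L: "Suc (Suc m) < length r" using that m by simp
      then have "(q @ tl r)!k = r!Suc m" "(q @ tl r)!Suc k = r!Suc (Suc m)"
        using 3 m by (auto simp: nth_append nth_tl)
      moreover note L
      ultimately show ?thesis using r(4) by simp
    qed
  qed
  moreover have "last (q @ tl r) = t"
    using q r by (cases "tl r = []") (auto simp: last_tl, metis last_ConsL list.collapse)
  ultimately show ?thesis using q unfolding is_path_def by simp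
qed

lemma dist_idx:
  assumes "shortest_path E p s t" "i < length p"
  shows "dist E s (p!i) = i"
proof -
  have P: "is_path E p s t" and D: "length p - 1 = dist E s t"
    using assms(1) unfolding shortest_path_def by auto
  have T: "is_path E (take (Suc i) p) s (p!i)" using path_take[OF P assms(2)] .
  have le: "dist E s (p!i) \<le> i" using dist_le[OF T] assms(2) by simp
  have ex: "\<exists>q. is_path E q s (p!i) \<and> length q = Suc (dist E s (p!i))"
    unfolding dist_def
    by (rule LeastI_ex) (use T assms(2) in \<open>intro exI[of _ i] exI[of _ "take (Suc i) p"], auto\<close>)
  then obtain q where q: "is_path E q s (p!i)" "length q = Suc (dist E s (p!i))" by blast
  have "is_path E (q @ tl (drop i p)) s t" using path_append[OF q(1) path_drop[OF P assms(2)]] .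
  from dist_le[OF this] have "dist E s t \<le> length q + (length p - i - 1) - 1" by simp
  then show ?thesis using le q(2) D assms(2) by linarith
qed

lemma sublist_edge:
  assumes "sublist r p" "Suc k < length r"
  shows "\<exists>m. Suc m < length p \<and> p!m = r!k \<and> p!Suc m = r!Suc k"
proof -
  obtain ps ss where "p = ps @ r @ ss" using assms(1) unfolding sublist_def by blast
  then show ?thesis using assms(2)
    by (intro exI[of _ "length ps + k"]) (auto simp: nth_append)
qed

lemma pred_unique:
  assumes "distinct p" "(a,v) \<in> path_edges p" "(b,v) \<in> path_edges p"
  shows "a = b"
proof -
  obtain i j where "Suc i < length p" "p!i = a" "p!Suc i = v" "Suc j < length p" "p!j = b" "p!Suc j = v"
    using assms(2,3) unfolding in_path_edges by blast
  then show ?thesis using assms(1) by (metis nth_eq_iff_index_eq Suc_inject)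
qed

lemma edge_target_mem: "(a,v) \<in> path_edges p \<Longrightarrow> v \<in> set p"
  unfolding in_path_edges by auto

lemma no_double:
  assumes ac: "acyclic E" and EV: "E \<subseteq> V \<times> V" and tb: "tie_breaking V E \<pi>" and co: "consistent V E \<pi>"
    and V: "s1 \<in> V" "t1 \<in> V" "s2 \<in> V" "t2 \<in> V"
    and R: "(s1,t1) \<in> E\<^sup>*" "(s2,t2) \<in> E\<^sup>*"
    and ij: "i < j" "j < length (\<pi> (s1,t1))"
    and uq: "\<pi> (s1,t1) ! i \<in> set (\<pi> (s2,t2))" and vq: "\<pi> (s1,t1) ! j \<in> set (\<pi> (s2,t2))"
    and ep: "(w, \<pi> (s1,t1) ! j) \<in> path_edges (\<pi> (s1,t1))"
    and eq: "(w', \<pi> (s1,t1) ! j) \<in> path_edges (\<pi> (s2,t2))"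
    and ww: "w \<noteq> w'"
  shows False
proof -
  define p where "p = \<pi> (s1,t1)"
  define q where "q = \<pi> (s2,t2)"
  define u where "u = p!i"
  define v where "v = p!j"
  have sp: "shortest_path E p s1 t1" using tb V R unfolding tie_breaking_def p_def by blast
  have sq: "shortest_path E q s2 t2" using tb V R unfolding tie_breaking_def q_def by blast
  have pp: "is_path E p s1 t1" using sp unfolding shortest_path_def by blast
  have pq: "is_path E q s2 t2" using sq unfolding shortest_path_def by blast
  have dp: "distinct p" using path_distinct[OF ac pp] .
  have dq: "distinct q" using path_distinct[OF ac pq] .
  have jp: "j < length p" using ij p_def by simp
  have uv: "u \<noteq> v" using dp ij jp unfolding u_def v_def by (simp add: nth_eq_iff_index_eq)
  have uvp: "(u,v) \<in> E\<^sup>+" using path_trancl[OF pp ij(1) jp] u_def v_def by simp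
  obtain i' where i': "i' < length q" "q!i' = u" using uq unfolding u_def p_def q_def by (metis in_set_conv_nth)
  obtain j' where j': "j' < length q" "q!j' = v" using vq unfolding v_def p_def q_def by (metis in_set_conv_nth)
  have "i' < j'"
  proof (rule ccontr)
    assume "\<not> i' < j'"
    then have "j' < i'" using i' j' uv by (metis linorder_neqE_nat)
    then have "(v,u) \<in> E\<^sup>+" using path_trancl[OF pq _ i'(1)] i' j' by metis
    then have "(u,u) \<in> E\<^sup>+" using uvp by simp
    then show False using ac unfolding acyclic_def by blast
  qed
  have uV: "u \<in> V" using path_V[OF EV V(1) pp] ij jp u_def by simp
  have vV: "v \<in> V" using path_V[OF EV V(1) pp] jp v_def by simp
  have s1p: "sublist (\<pi> (u,v)) p"
  proof -
    have "dist E s1 u < dist E s1 v" using dist_idx[OF sp] ij jp u_def v_def by simp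
    moreover have "u \<in> set p" "v \<in> set p" using ij jp u_def v_def by auto
    ultimately show ?thesis using co V R unfolding consistent_def p_def by blast
  qed
  have s1q: "sublist (\<pi> (u,v)) q"
  proof -
    have "dist E s2 u < dist E s2 v" using dist_idx[OF sq] i' j' \<open>i' < j'\<close> by metis
    moreover have "u \<in> set q" "v \<in> set q" using i' j' by (metis nth_mem)+
    ultimately show ?thesis using co V R unfolding consistent_def q_def by blast
  qed
  define r where "r = \<pi> (u,v)"
  have pr: "is_path E r u v" using tb uV vV uvp unfolding tie_breaking_def shortest_path_def r_def
    by (meson trancl_into_rtrancl)
  have lr: "2 \<le> length r"
  proof (rule ccontr)
    assume "\<not> 2 \<le> length r"
    moreover have "r \<noteq> []" using pr unfolding is_path_def by auto
    ultimately have "length r = 1" by (cases r) (auto simp: Suc_le_eq)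
    then have "hd r = last r" by (cases r) auto
    then show False using pr uv unfolding is_path_def by auto
  qed
  define k where "k = length r - 2"
  have k: "Suc k < length r" "r!Suc k = v" using lr pr unfolding k_def is_path_def
    by (auto simp: last_conv_nth) (metis Suc_diff_Suc Suc_1 diff_Suc_1 less_le_trans lessI numeral_2_eq_2)
  obtain m where m: "Suc m < length p" "p!m = r!k" "p!Suc m = v" using sublist_edge[OF s1p[folded r_def] k(1)] k(2) by auto
  obtain m' where m': "Suc m' < length q" "q!m' = r!k" "q!Suc m' = v" using sublist_edge[OF s1q[folded r_def] k(1)] k(2) by auto
  have "(r!k, v) \<in> path_edges p" using m unfolding in_path_edges by blast
  then have "w = r!k" using pred_unique[OF dp] ep unfolding p_def v_def by blast
  moreover have "(r!k, v) \<in> path_edges q" using m' unfolding in_path_edges by blast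
  then have "w' = r!k" using pred_unique[OF dq] eq unfolding q_def v_def p_def by blast
  ultimately show False using ww by simp
qed

lemma edge_idx: "(a,v) \<in> path_edges p \<Longrightarrow> \<exists>j<length p. p!j = v"
  unfolding in_path_edges by (metis)

lemma event_unique:
  assumes ac: "acyclic E" and EV: "E \<subseteq> V \<times> V" and tb: "tie_breaking V E \<pi>" and co: "consistent V E \<pi>"
    and V: "s1 \<in> V" "t1 \<in> V" "s2 \<in> V" "t2 \<in> V"
    and R: "(s1,t1) \<in> E\<^sup>*" "(s2,t2) \<in> E\<^sup>*"
    and e: "e1 \<in> path_edges (\<pi> (s1,t1))" "e2 \<in> path_edges (\<pi> (s2,t2))" "e1 \<noteq> e2" "snd e1 = snd e2"
    and d: "d1 \<in> path_edges (\<pi> (s1,t1))" "d2 \<in> path_edges (\<pi> (s2,t2))" "d1 \<noteq> d2" "snd d1 = snd d2"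
  shows "{e1,e2} = {d1,d2}"
proof -
  define p where "p = \<pi> (s1,t1)"
  define q where "q = \<pi> (s2,t2)"
  have pp: "is_path E p s1 t1" using tb V R unfolding tie_breaking_def shortest_path_def p_def by blast
  have pq: "is_path E q s2 t2" using tb V R unfolding tie_breaking_def shortest_path_def q_def by blast
  have dp: "distinct p" using path_distinct[OF ac pp] .
  have dq: "distinct q" using path_distinct[OF ac pq] .
  obtain w1 v where e1: "e1 = (w1, v)" by (cases e1)
  obtain w2 where e2: "e2 = (w2, v)" using e(4) e1 by (cases e2) auto
  obtain x1 v' where d1: "d1 = (x1, v')" by (cases d1)
  obtain x2 where d2: "d2 = (x2, v')" using d(4) d1 by (cases d2) auto
  have w: "w1 \<noteq> w2" using e(3) e1 e2 by simp
  have x: "x1 \<noteq> x2" using d(3) d1 d2 by simp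
  show ?thesis
  proof (cases "v = v'")
    case True
    have a1: "(w1,v) \<in> path_edges p" "(x1,v) \<in> path_edges p"
      using e(1) d(1) e1 d1 p_def True by simp_all
    have a2: "(w2,v) \<in> path_edges q" "(x2,v) \<in> path_edges q"
      using e(2) d(2) e2 d2 q_def True by simp_all
    have "w1 = x1" using pred_unique[OF dp a1] .
    moreover have "w2 = x2" using pred_unique[OF dq a2] .
    ultimately show ?thesis using e1 e2 d1 d2 True by simp
  next
    case False
    have "(w1,v) \<in> path_edges p" using e(1) e1 p_def by simp
    from edge_idx[OF this] obtain j where j: "j < length p" "p!j = v" by blast
    have "(x1,v') \<in> path_edges p" using d(1) d1 p_def by simp
    from edge_idx[OF this] obtain i where i: "i < length p" "p!i = v'" by blast
    have "(w2,v) \<in> path_edges q" using e(2) e2 q_def by simp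
    then have vq: "v \<in> set q" by (rule edge_target_mem)
    have "(x2,v') \<in> path_edges q" using d(2) d2 q_def by simp
    then have vq': "v' \<in> set q" by (rule edge_target_mem)
    have "i \<noteq> j" using False i j by auto
    then consider "i < j" | "j < i" by linarith
    then show ?thesis
    proof cases
      case 1
      show ?thesis
        using no_double[OF ac EV tb co V R 1 j(1)[unfolded p_def], of w1 w2] i j vq vq' e e1 e2 w
        unfolding p_def q_def by auto
    next
      case 2
      show ?thesis
        using no_double[OF ac EV tb co V R 2 i(1)[unfolded p_def], of x1 x2] i j vq vq' d d1 d2 x
        unfolding p_def q_def by auto
    qed
  qed
qed

theorem mainTheorem5:
  fixes V :: "'a set" and E :: "('a \<times> 'a) set" and K :: "'a set" and k :: nat
    and P :: "('a \<times> 'a) set" and \<pi> :: "'a \<times> 'a \<Rightarrow> 'a list"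
  assumes "finite V" and "E \<subseteq> V \<times> V" and "acyclic E"
    and "K \<subseteq> V" and "card K = k"
    and "P \<subseteq> K \<times> K" and "\<forall>(s, t)\<in>P. (s, t) \<in> E\<^sup>*"
    and "tie_breaking V E \<pi>" and "consistent V E \<pi>"
  shows "card (branching_events (union_edges \<pi> P)) \<le> card P * (card P - 1) div 2"
proof -
  note ac = assms(3) and EV = assms(2) and tb = assms(8) and co = assms(9)
  have PV: "P \<subseteq> V \<times> V" using assms(4,6) by blast
  have finP: "finite P" using PV assms(1) by (meson finite_SigmaI finite_subset)
  define good where "good X a b \<longleftrightarrow> a \<in> P \<and> b \<in> P \<and> a \<noteq> b \<and>
     (\<exists>e1 e2. X = {e1,e2} \<and> e1 \<in> path_edges (\<pi> a) \<and> e2 \<in> path_edges (\<pi> b) \<and> e1 \<noteq> e2 \<and> snd e1 = snd e2)" for X a b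
  have dist_a: "distinct (\<pi> a)" if "a \<in> P" for a
  proof -
    obtain s t where a: "a = (s,t)" by (cases a)
    have "s \<in> V" "t \<in> V" "(s,t) \<in> E\<^sup>*" using that a PV assms(7) by auto
    then have "is_path E (\<pi> a) s t" using tb a unfolding tie_breaking_def shortest_path_def by blast
    then show ?thesis using path_distinct[OF ac] by blast
  qed
  have good_sym: "good X b a" if "good X a b" for X a b
    using that unfolding good_def by (metis insert_commute)
  define B where "B = branching_events (union_edges \<pi> P)"
  define f where "f X = (SOME A. \<exists>a b. A = {a,b} \<and> good X a b)" for X
  have ex: "\<exists>a b. good X a b" if XB: "X \<in> B" for X
  proof -
    obtain e1 e2 where X: "X = {e1,e2}" "e1 \<in> union_edges \<pi> P" "e2 \<in> union_edges \<pi> P" "e1 \<noteq> e2" "snd e1 = snd e2"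
      using XB unfolding B_def branching_events_def by blast
    obtain a where a: "a \<in> P" "e1 \<in> path_edges (\<pi> a)" using X(2) unfolding union_edges_def by blast
    obtain b where b: "b \<in> P" "e2 \<in> path_edges (\<pi> b)" using X(3) unfolding union_edges_def by blast
    have "a \<noteq> b"
    proof
      assume "a = b"
      then have "fst e1 = fst e2" using pred_unique[OF dist_a[OF a(1)], of "fst e1" "snd e1" "fst e2"] a b X(5) by (metis prod.collapse)
      then show False using X(4,5) by (simp add: prod_eq_iff)
    qed
    then show ?thesis using X a b unfolding good_def by blast
  qed
  have fX: "\<exists>a b. f X = {a,b} \<and> good X a b" if "X \<in> B" for X
    unfolding f_def by (rule someI_ex) (use ex[OF that] in blast)
  have inj: "inj_on f B"
  proof (rule inj_onI)
    fix X Y assume XY: "X \<in> B" "Y \<in> B" "f X = f Y"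
    obtain a b where ab: "f X = {a,b}" "good X a b" using fX[OF XY(1)] by blast
    obtain c d where cd: "f Y = {c,d}" "good Y c d" using fX[OF XY(2)] by blast
    have "good Y a b"
    proof -
      have "{a,b} = {c,d}" using ab cd XY(3) by simp
      then have "(a = c \<and> b = d) \<or> (a = d \<and> b = c)" by (metis doubleton_eq_iff)
      then show ?thesis using cd(2) good_sym by blast
    qed
    obtain s1 t1 where a: "a = (s1,t1)" by (cases a)
    obtain s2 t2 where b: "b = (s2,t2)" by (cases b)
    have V: "s1 \<in> V" "t1 \<in> V" "s2 \<in> V" "t2 \<in> V" "(s1,t1) \<in> E\<^sup>*" "(s2,t2) \<in> E\<^sup>*"
      using ab(2) a b PV assms(7) unfolding good_def by auto
    obtain e1 e2 where e: "X = {e1,e2}" "e1 \<in> path_edges (\<pi> (s1,t1))" "e2 \<in> path_edges (\<pi> (s2,t2))" "e1 \<noteq> e2" "snd e1 = snd e2"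
      using ab(2) a b unfolding good_def by blast
    obtain d1 d2 where d: "Y = {d1,d2}" "d1 \<in> path_edges (\<pi> (s1,t1))" "d2 \<in> path_edges (\<pi> (s2,t2))" "d1 \<noteq> d2" "snd d1 = snd d2"
      using \<open>good Y a b\<close> a b unfolding good_def by blast
    show "X = Y" using event_unique[OF ac EV tb co V e(2-5) d(2-5)] e(1) d(1) by simp
  qed
  have img: "f ` B \<subseteq> {A. A \<subseteq> P \<and> card A = 2}"
  proof
    fix A assume "A \<in> f ` B"
    then obtain X where "X \<in> B" "A = f X" by blast
    then obtain a b where "A = {a,b}" "good X a b" using fX by blast
    then show "A \<in> {A. A \<subseteq> P \<and> card A = 2}" unfolding good_def by auto
  qed
  have "card B \<le> card {A. A \<subseteq> P \<and> card A = 2}"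
    by (rule card_inj_on_le[OF inj img]) (use finP in simp)
  also have "\<dots> = card P choose 2" using n_subsets[OF finP] .
  finally show ?thesis unfolding B_def choose_two .
qed

end
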